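(* Let $w_0,w_1,w_2,\dots$ be complex numbers. If $f\in L^2([0,1])$ satisfies $\int_0^1x^nf(x)\,dx=w_n$ for all $n\ge0$, then $Uf\in H^2$ satisfies $Uf(\frac{n}{n+1})=(n+1)w_n$ for all $n\ge0$. If $h\in H^2$ satisfies $h(\frac{n}{n+1})=w_n$ for all $n\ge0$, then $U^*h\in L^2([0,1])$ satisfies $\int_0^1x^n\,U^*h(x)\,dx=\frac{1}{n+1}w_n$ for all $n\ge0$.
   Context: $H^2$ is the Hardy space of the unit disc $\mathbb{D}$, with Szegő kernel $k_\alpha(z)=\frac{1}{1-\bar\alpha z}$. The Sarason transform $U$ is the unique unitary operator from $L^2([0,1])$ onto $H^2$ with $U(x^n)=\frac{1}{n+1}k_{\frac{n}{n+1}}$ for all integers $n\ge0$. *)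

theory Defs
  imports "HOL-Analysis.Analysis"
begin

definition L2_01 :: "(real \<Rightarrow> complex) set" where
  "L2_01 = {f. f \<in> borel_measurable (lebesgue_on {0..1}) \<and>
               integrable (lebesgue_on {0..1}) (\<lambda>x. (cmod (f x))\<^sup>2)}"

definition L2_inner :: "(real \<Rightarrow> complex) \<Rightarrow> (real \<Rightarrow> complex) \<Rightarrow> complex" where
  "L2_inner f g = (LINT x | lebesgue_on {0..1}. f x * cnj (g x))"

definition monomial :: "nat \<Rightarrow> real \<Rightarrow> complex" where
  "monomial n = (\<lambda>x. complex_of_real (x ^ n))"

definition taylor_coeff :: "(complex \<Rightarrow> complex) \<Rightarrow> nat \<Rightarrow> complex" where
  "taylor_coeff f n = (deriv ^^ n) f 0 / of_nat (fact n)"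

definition H2 :: "(complex \<Rightarrow> complex) set" where
  "H2 = {f. f holomorphic_on ball 0 1 \<and> summable (\<lambda>n. (cmod (taylor_coeff f n))\<^sup>2)}"

definition H2_inner :: "(complex \<Rightarrow> complex) \<Rightarrow> (complex \<Rightarrow> complex) \<Rightarrow> complex" where
  "H2_inner f g = (\<Sum>n. taylor_coeff f n * cnj (taylor_coeff g n))"

definition szego :: "complex \<Rightarrow> complex \<Rightarrow> complex" where
  "szego \<alpha> z = 1 / (1 - cnj \<alpha> * z)"

text \<open>U is a unitary operator from L^2([0,1]) onto H^2 (elements of H^2 are compared
  on the open unit disc only) with U(x^n) = 1/(n+1) k_{n/(n+1)}.  By the context such U
  exists and is unique; we characterise it by these properties.\<close>
definition sarason_transform :: "((real \<Rightarrow> complex) \<Rightarrow> (complex \<Rightarrow> complex)) \<Rightarrow> bool" where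
  "sarason_transform U \<longleftrightarrow>
     (\<forall>f\<in>L2_01. U f \<in> H2) \<and>
     (\<forall>f\<in>L2_01. \<forall>g\<in>L2_01. \<forall>a::complex. \<forall>z\<in>ball 0 1.
        U (\<lambda>x. a * f x + g x) z = a * U f z + U g z) \<and>
     (\<forall>f\<in>L2_01. \<forall>g\<in>L2_01. H2_inner (U f) (U g) = L2_inner f g) \<and>
     (\<forall>h\<in>H2. \<exists>f\<in>L2_01. \<forall>z\<in>ball 0 1. U f z = h z) \<and>
     (\<forall>n::nat. \<forall>z\<in>ball 0 1.
        U (monomial n) z = szego (of_real (real n / real (n + 1))) z / of_nat (n + 1))"

text \<open>g represents U^* h: the adjoint relation <U f, h> = <f, g> for all f in L^2.\<close>
definition is_adjoint_image ::
  "((real \<Rightarrow> complex) \<Rightarrow> (complex \<Rightarrow> complex)) \<Rightarrow> (complex \<Rightarrow> complex) \<Rightarrow> (real \<Rightarrow> complex) \<Rightarrow> bool" where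
  "is_adjoint_image U h g \<longleftrightarrow> g \<in> L2_01 \<and> (\<forall>f\<in>L2_01. H2_inner (U f) h = L2_inner f g)"

end

theory Submission imports Defs "HOL-Complex_Analysis.Complex_Analysis" begin

lemma taylor_geom:
  fixes p :: "complex \<Rightarrow> complex" and a :: real and c :: complex
  assumes a: "0 \<le> a" "a < 1" and p: "\<forall>z\<in>ball 0 1. p z = c / (1 - of_real a * z)"
  shows "taylor_coeff p k = c * of_real a ^ k"
proof -
  define F where "F = Abs_fps (\<lambda>k. c * (of_real a :: complex) ^ k)"
  have "summable (\<lambda>k. c * of_real a ^ k * (1/2::complex) ^ k)"
  proof -
    have "summable (\<lambda>k. (of_real a * (1/2::complex)) ^ k)"
      using a by (intro summable_geometric) (simp add: norm_mult)
    hence "summable (\<lambda>k. c * (of_real a * (1/2::complex)) ^ k)"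
      by (rule summable_mult)
    thus ?thesis by (simp only: power_mult_distrib mult.assoc)
  qed
  hence "conv_radius (\<lambda>k. c * (of_real a :: complex) ^ k) \<ge> norm (1/2::complex)"
    by (rule conv_radius_geI)
  hence rad: "fps_conv_radius F > 0"
    unfolding F_def fps_conv_radius_def
    using order.strict_trans2[of 0 "ereal (1/2)"] by (simp add: zero_ereal_def)
  have ev: "\<forall>z\<in>ball 0 1. eval_fps F z = p z"
  proof
    fix z :: complex assume z: "z \<in> ball 0 1"
    have "norm (of_real a * z) = a * norm z" using a by (simp add: norm_mult)
    also have "\<dots> \<le> norm z" using a by (intro mult_left_le_one_le) auto
    also have "\<dots> < 1" using z by simp
    finally have n: "norm (of_real a * z) < 1" .
    have "(\<lambda>k. (of_real a * z) ^ k) sums (1 / (1 - of_real a * z))"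
      using geometric_sums[OF n] by simp
    hence "(\<lambda>k. c * (of_real a * z) ^ k) sums (c * (1 / (1 - of_real a * z)))"
      by (rule sums_mult)
    hence "(\<lambda>k. c * of_real a ^ k * z ^ k) sums (c / (1 - of_real a * z))"
      by (simp add: power_mult_distrib mult.assoc)
    thus "eval_fps F z = p z" using p z unfolding eval_fps_def F_def
      by (simp add: sums_iff)
  qed
  have "eventually (\<lambda>z. eval_fps F z = p z) (nhds 0)"
    using ev eventually_nhds_in_open[of "ball 0 1" 0]
    by (auto elim: eventually_mono)
  hence "(deriv ^^ k) (eval_fps F) 0 = (deriv ^^ k) p 0"
    by (intro higher_deriv_cong_ev) auto
  with fps_nth_conv_deriv[OF rad, of k] show ?thesis
    unfolding taylor_coeff_def F_def by simp
qed

lemma H2_sums: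
  assumes "h \<in> H2" "z \<in> ball 0 1"
  shows "(\<lambda>k. taylor_coeff h k * z ^ k) sums h z"
  using holomorphic_power_series[of h 0 1 z] assms
  unfolding H2_def taylor_coeff_def by simp

lemma mono_L2: "monomial n \<in> L2_01"
proof -
  have c: "continuous_on {0..1::real} (\<lambda>x. (cmod (monomial n x))\<^sup>2)"
    unfolding monomial_def by (intro continuous_intros)
  have "(\<lambda>x. (cmod (monomial n x))\<^sup>2) absolutely_integrable_on {0..1::real}"
    using c by (rule absolutely_integrable_continuous_real)
  hence i: "integrable (lebesgue_on {0..1}) (\<lambda>x. (cmod (monomial n x))\<^sup>2)"
    by (simp add: integrable_restrict_space set_integrable_def)
  have "monomial n \<in> borel_measurable (lebesgue_on {0..1})"
    unfolding monomial_def
    by (intro continuous_imp_measurable_on_sets_lebesgue continuous_intros) auto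
  with i show ?thesis unfolding L2_01_def by auto
qed

theorem proposition2p2:
  fixes U :: "(real \<Rightarrow> complex) \<Rightarrow> (complex \<Rightarrow> complex)"
    and w :: "nat \<Rightarrow> complex"
  assumes "sarason_transform U"
  shows "(\<forall>f\<in>L2_01. (\<forall>n. (LINT x | lebesgue_on {0..1}. monomial n x * f x) = w n) \<longrightarrow>
            (\<forall>n. U f (of_real (real n / real (n + 1))) = of_nat (n + 1) * w n))
       \<and> (\<forall>h\<in>H2. \<forall>g. is_adjoint_image U h g \<longrightarrow>
            (\<forall>n. h (of_real (real n / real (n + 1))) = w n) \<longrightarrow>
            (\<forall>n. (LINT x | lebesgue_on {0..1}. monomial n x * g x) = w n / of_nat (n + 1)))"
proof -
  note S = assms[unfolded sarason_transform_def]
  have inH2: "\<And>f. f \<in> L2_01 \<Longrightarrow> U f \<in> H2" using S by blast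
  have inner: "\<And>f g. f \<in> L2_01 \<Longrightarrow> g \<in> L2_01 \<Longrightarrow> H2_inner (U f) (U g) = L2_inner f g"
    using S by blast
  have tc: "taylor_coeff (U (monomial n)) k
      = (1 / of_nat (n+1)) * of_real (real n / real (n + 1)) ^ k" for n k
  proof (rule taylor_geom)
    show "0 \<le> real n / real (n + 1)" by simp
    show "real n / real (n + 1) < 1" by simp
    show "\<forall>z\<in>ball 0 1. U (monomial n) z = 1 / of_nat (n + 1) / (1 - of_real (real n / real (n + 1)) * z)"
      using S by (auto simp: szego_def)
  qed
  define \<alpha> where "\<alpha> n = (of_real (real n / real (n + 1)) :: complex)" for n
  have \<alpha>ball: "\<alpha> n \<in> ball 0 1" for n
  proof -
    have "norm (of_real (real n / real (n + 1)) :: complex) = real n / real (n + 1)"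
      by (simp only: norm_of_real) simp
    also have "\<dots> < 1" by simp
    finally show ?thesis unfolding \<alpha>_def by simp
  qed
  have cnja: "cnj (\<alpha> n) = \<alpha> n" for n unfolding \<alpha>_def by simp
  have tc': "taylor_coeff (U (monomial n)) k = \<alpha> n ^ k / of_nat (n+1)" for n k
    using tc[of n k] unfolding \<alpha>_def by simp
  show ?thesis
  proof (intro conjI ballI allI impI)
    fix f n assume f: "f \<in> L2_01"
      and hw: "\<forall>n. (LINT x | lebesgue_on {0..1}. monomial n x * f x) = w n"
    have "(\<lambda>k. taylor_coeff (U f) k * \<alpha> n ^ k) sums U f (\<alpha> n)"
      by (rule H2_sums[OF inH2[OF f] \<alpha>ball])
    hence "(\<lambda>k. taylor_coeff (U f) k * \<alpha> n ^ k / of_nat (n+1)) sums (U f (\<alpha> n) / of_nat (n+1))"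
      by (rule sums_divide)
    hence "H2_inner (U f) (U (monomial n)) = U f (\<alpha> n) / of_nat (n+1)"
      unfolding H2_inner_def tc' by (simp add: sums_iff cnja)
    moreover have "H2_inner (U f) (U (monomial n)) = w n"
      using inner[OF f mono_L2] hw unfolding L2_inner_def
      by (simp add: monomial_def mult.commute)
    ultimately have e: "U f (\<alpha> n) / of_nat (n+1) = w n" by simp
    have nz: "(of_nat (n+1) :: complex) \<noteq> 0" by (simp only: of_nat_eq_0_iff)
    have "U f (\<alpha> n) = of_nat (n+1) * (U f (\<alpha> n) / of_nat (n+1))"
      using nz by simp
    with e show "U f (of_real (real n / real (n + 1))) = of_nat (n + 1) * w n"
      unfolding \<alpha>_def by simp
  next
    fix h g n assume h: "h \<in> H2" and adj: "is_adjoint_image U h g"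
      and hw: "\<forall>n. h (of_real (real n / real (n + 1))) = w n"
    have "(\<lambda>k. taylor_coeff h k * \<alpha> n ^ k) sums h (\<alpha> n)"
      by (rule H2_sums[OF h \<alpha>ball])
    hence "(\<lambda>k. cnj (taylor_coeff h k * \<alpha> n ^ k)) sums cnj (h (\<alpha> n))"
      by (rule sums_cnj[THEN iffD2])
    hence "(\<lambda>k. cnj (taylor_coeff h k * \<alpha> n ^ k) / of_nat (n+1)) sums (cnj (h (\<alpha> n)) / of_nat (n+1))"
      by (rule sums_divide)
    hence "H2_inner (U (monomial n)) h = cnj (h (\<alpha> n)) / of_nat (n+1)"
      unfolding H2_inner_def tc' by (simp add: sums_iff cnja mult.commute)
    moreover have "H2_inner (U (monomial n)) h = L2_inner (monomial n) g"
      using adj mono_L2 unfolding is_adjoint_image_def by blast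
    ultimately have "(LINT x | lebesgue_on {0..1}. monomial n x * cnj (g x)) = cnj (w n) / of_nat (n+1)"
      using hw unfolding L2_inner_def \<alpha>_def by simp
    hence "cnj (LINT x | lebesgue_on {0..1}. monomial n x * cnj (g x)) = w n / of_nat (n+1)"
      by simp
    moreover have "cnj (LINT x | lebesgue_on {0..1}. monomial n x * cnj (g x))
        = (LINT x | lebesgue_on {0..1}. monomial n x * g x)"
    proof -
      have "cnj (LINT x | lebesgue_on {0..1}. monomial n x * cnj (g x))
          = (LINT x | lebesgue_on {0..1}. cnj (monomial n x * cnj (g x)))"
        by (rule Bochner_Integration.integral_cnj[symmetric])
      also have "\<dots> = (LINT x | lebesgue_on {0..1}. monomial n x * g x)"
        by (simp add: monomial_def)
      finally show ?thesis .
    qed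
    ultimately show "(LINT x | lebesgue_on {0..1}. monomial n x * g x) = w n / of_nat (n + 1)"
      by simp
  qed
qed

end
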